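(* Let $\{X_m\}$ be nonnegative random variables and $b_m>0$ with $b_m\to\infty$. (a) Suppose there are $p>1$ and $C_0>0$ such that for every $\beta>0$, $\limsup_{m\to\infty}b_m^{-1}\log\mathbb{E}\exp\{\beta X_m\}\le C_0\beta^p$ and $\liminf_{m\to\infty}b_m^{-1}\log\mathbb{E}\exp\{\beta b_m^{1/2}X_m^{1/2}\}\ge\frac{p+1}{p}(pC_0)^{1/(p+1)}(\beta/2)^{2p/(p+1)}$. Then $\lim_{m\to\infty}b_m^{-1}\log\mathbb{E}\exp\{\beta X_m\}=C_0\beta^p$ for all $\beta>0$. (b) The same conclusion holds if instead, for every $\beta>0$, $\limsup_{m\to\infty}b_m^{-1}\log\mathbb{E}\exp\{\beta X_m\}<\infty$ and $\lim_{m\to\infty}b_m^{-1}\log\mathbb{E}\exp\{\beta b_m^{1/2}X_m^{1/2}\}=\frac{p+1}{p}(pC_0)^{1/(p+1)}(\beta/2)^{2p/(p+1)}$, for some $p>1$, $C_0>0$. *)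

theory Defs
  imports "HOL-Probability.Probability"
begin

text \<open>Logarithm of E exp(Y) as an extended real; equals infinity when the
  expectation is infinite (it is always positive on a probability space).\<close>
definition log_Eexp :: "'a measure \<Rightarrow> ('a \<Rightarrow> real) \<Rightarrow> ereal" where
  "log_Eexp M Y =
     (let I = (\<integral>\<^sup>+ x. ennreal (exp (Y x)) \<partial>M)
      in if I = \<top> then \<infinity> else ereal (ln (enn2real I)))"

end

theory Submission
  imports Defs
begin

lemma I_ge1:
  assumes "prob_space M" "\<And>x. x \<in> space M \<Longrightarrow> f x \<ge> 0"
  shows "1 \<le> (\<integral>\<^sup>+ x. ennreal (exp (f x)) \<partial>M)"
proof -
  have "(\<integral>\<^sup>+ x. 1 \<partial>M) \<le> (\<integral>\<^sup>+ x. ennreal (exp (f x)) \<partial>M)"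
    by (rule nn_integral_mono) (use assms in auto)
  moreover have "(\<integral>\<^sup>+ x. 1 \<partial>M) = 1"
    using assms(1) by (simp add: prob_space.emeasure_space_1)
  ultimately show ?thesis by simp
qed

lemma bridge:
  assumes "prob_space M" "\<And>x. x \<in> space M \<Longrightarrow> f x \<ge> 0" "b > 0"
  shows "(ereal r < ereal (1/b) * log_Eexp M f \<longleftrightarrow> ennreal (exp (b*r)) < (\<integral>\<^sup>+ x. ennreal (exp (f x)) \<partial>M))
       \<and> (ereal (1/b) * log_Eexp M f < ereal r \<longleftrightarrow> (\<integral>\<^sup>+ x. ennreal (exp (f x)) \<partial>M) < ennreal (exp (b*r)))"
proof -
  define I where "I = (\<integral>\<^sup>+ x. ennreal (exp (f x)) \<partial>M)"
  have I1: "1 \<le> I" unfolding I_def by (rule I_ge1[OF assms(1,2)])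
  show ?thesis
  proof (cases "I = \<top>")
    case True
    then show ?thesis using assms(3) unfolding log_Eexp_def I_def[symmetric] by simp
  next
    case False
    define t where "t = enn2real I"
    have It: "I = ennreal t" using False unfolding t_def by (simp add: ennreal_enn2real_if)
    have t1: "t \<ge> 1" using I1 It by (metis ennreal_1 ennreal_le_iff2 zero_less_one order.strict_trans2 linorder_not_less less_le_not_le one_le_numeral)
    have L: "log_Eexp M f = ereal (ln t)"
      unfolding log_Eexp_def I_def[symmetric] using False t_def by simp
    have e: "ereal (1/b) * ereal (ln t) = ereal (ln t / b)" by simp
    have "r < ln t / b \<longleftrightarrow> b*r < ln t" using assms(3) by (simp add: field_simps)
    also have "\<dots> \<longleftrightarrow> exp (b*r) < t" using t1 by (metis exp_less_cancel_iff exp_ln less_le_trans zero_less_one)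
    finally have A: "r < ln t / b \<longleftrightarrow> exp (b*r) < t" .
    have "ln t / b < r \<longleftrightarrow> ln t < b*r" using assms(3) by (simp add: field_simps)
    also have "\<dots> \<longleftrightarrow> t < exp (b*r)" using t1 by (metis exp_less_cancel_iff exp_ln less_le_trans zero_less_one)
    finally have B: "ln t / b < r \<longleftrightarrow> t < exp (b*r)" .
    show ?thesis unfolding L e I_def[symmetric] It using A B t1
      by (simp add: ennreal_less_iff)
  qed
qed

definition Kf :: "real \<Rightarrow> real \<Rightarrow> real \<Rightarrow> real" where
  "Kf p C0 \<beta> = (p + 1) / p * (p * C0) powr (1 / (p + 1)) * (\<beta> / 2) powr (2 * p / (p + 1))"

lemma ln_mult3: "x > 0 \<Longrightarrow> y > 0 \<Longrightarrow> z > 0 \<Longrightarrow> ln (x*y*z) = ln x + ln y + ln z"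
  for x y z :: real by (simp add: ln_mult)

lemma ln_Kf:
  assumes "p > 1" "C0 > 0" "\<beta> > 0"
  shows "ln (Kf p C0 \<beta>) = ln (p+1) - ln p + (ln p + ln C0)/(p+1) + 2*p/(p+1) * (ln \<beta> - ln 2)"
proof -
  have "ln (Kf p C0 \<beta>) = ln ((p+1)/p) + ln ((p * C0) powr (1 / (p + 1))) + ln ((\<beta> / 2) powr (2 * p / (p + 1)))"
    unfolding Kf_def using assms by (intro ln_mult3) auto
  also have "\<dots> = ln (p+1) - ln p + (ln p + ln C0)/(p+1) + 2*p/(p+1) * (ln \<beta> - ln 2)"
    using assms by (simp add: ln_div ln_powr ln_mult)
  finally show ?thesis .
qed

lemma Kf_pos: assumes "p > 1" "C0 > 0" "\<beta> > 0" shows "Kf p C0 \<beta> > 0"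
  using assms unfolding Kf_def by simp

lemma Kf_le:
  assumes p: "p > 1" and C0: "C0 > 0" and b: "\<beta> > 0" and t: "t > 0"
  shows "Kf p C0 \<beta> \<le> C0 * t powr p + \<beta>^2/(4*t)"
proof -
  define a where "a = (p+1)*C0*t powr p"
  define c where "c = ((p+1)/p) * (\<beta>^2/(4*t))"
  have a0: "a > 0" and c0: "c > 0" using assms by (auto simp: a_def c_def)
  have Y: "a powr (1/(p+1)) * c powr (p/(p+1)) \<le> (1/(p+1))*a + (p/(p+1))*c"
    by (rule Youngs_inequality_0) (use a0 c0 p in \<open>auto simp: field_simps\<close>)
  have r: "(1/(p+1))*a + (p/(p+1))*c = C0 * t powr p + \<beta>^2/(4*t)"
  proof -
    have "(1/(p+1))*a = C0 * t powr p" using p unfolding a_def by simp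
    moreover have "(p/(p+1))*c = \<beta>^2/(4*t)"
    proof -
      have "(p/(p+1))*((p+1)/p) = 1" using p by simp
      then show ?thesis unfolding c_def by (metis mult.assoc mult_1)
    qed
    ultimately show ?thesis by simp
  qed
  have "ln (a powr (1/(p+1)) * c powr (p/(p+1))) = ln (Kf p C0 \<beta>)"
  proof -
    have la: "ln a = ln (p+1) + ln C0 + p * ln t" using assms unfolding a_def by (simp add: ln_mult ln_powr)
    have lc: "ln c = ln (p+1) + 2 * ln \<beta> - 2 * ln 2 - ln t - ln p"
    proof -
      have "ln c = ln (p+1) - ln p + (ln (\<beta>^2) - ln (4*t))" using assms unfolding c_def by (simp add: ln_mult ln_div)
      moreover have "ln (\<beta>^2) = 2 * ln \<beta>" using b by (simp add: ln_realpow)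
      moreover have "ln (4*t) = 2 * ln 2 + ln t"
      proof -
        have "ln (4::real) = ln (2^2)" by simp
        also have "\<dots> = 2 * ln 2" by (subst ln_realpow) auto
        finally show ?thesis using t by (simp add: ln_mult)
      qed
      ultimately show ?thesis by simp
    qed
    have "ln (a powr (1/(p+1)) * c powr (p/(p+1))) = ln a / (p+1) + p/(p+1) * ln c"
      using a0 c0 by (simp add: ln_mult ln_powr)
    also have "\<dots> = ln (Kf p C0 \<beta>)" unfolding ln_Kf[OF assms(1-3)] la lc using p
      by (simp add: field_simps)
    finally show ?thesis .
  qed
  hence "a powr (1/(p+1)) * c powr (p/(p+1)) = Kf p C0 \<beta>"
    using a0 c0 Kf_pos[OF p C0 b] by (simp add: ln_inj_iff)
  then show ?thesis using Y r by simp
qed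

lemma Kf_eq:
  assumes p: "p > 1" and C0: "C0 > 0" and th: "\<theta> > 0"
  defines "\<beta> \<equiv> 2 * exp ((ln p + ln C0 + (p+1) * ln \<theta>)/2)"
  shows "\<beta> > 0" "Kf p C0 \<beta> = (p+1) * C0 * \<theta> powr p" "\<beta>^2/(4*\<theta>) = p * C0 * \<theta> powr p"
proof -
  show b0: "\<beta> > 0" unfolding \<beta>_def by simp
  have L1: "ln ((p+1) * C0 * \<theta> powr p) = ln (p+1) + ln C0 + p * ln \<theta>"
    using p C0 th by (simp add: ln_mult ln_powr)
  have L2: "ln (\<beta>) = ln 2 + (ln p + ln C0 + (p+1) * ln \<theta>)/2"
    unfolding \<beta>_def by (simp add: ln_mult)
  have "ln (Kf p C0 \<beta>) = ln ((p+1) * C0 * \<theta> powr p)"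
  proof -
    have q: "p + 1 > 0" using p by simp
    have "2*p/(p+1) * (ln \<beta> - ln 2) = p/(p+1) * (2*(ln \<beta> - ln 2))"
      by simp
    also have "2*(ln \<beta> - ln 2) = (ln p + ln C0) + (p+1) * ln \<theta>" using L2 by simp
    also have "p/(p+1) * ((ln p + ln C0) + (p+1) * ln \<theta>) = p/(p+1) * (ln p + ln C0) + p * ln \<theta>"
      using q by (simp add: distrib_left)
    finally have E: "2*p/(p+1) * (ln \<beta> - ln 2) = p/(p+1) * (ln p + ln C0) + p * ln \<theta>" .
    have F: "ln (Kf p C0 \<beta>) = ln (p+1) - ln p + (ln p + ln C0)/(p+1) + p/(p+1) * (ln p + ln C0) + p * ln \<theta>"
      unfolding ln_Kf[OF p C0 b0] E by simp
    have G: "(ln p + ln C0)/(p+1) + p/(p+1) * (ln p + ln C0) = ln p + ln C0"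
    proof -
      have "(ln p + ln C0)/(p+1) + p/(p+1) * (ln p + ln C0) = ((1 + p)/(p+1)) * (ln p + ln C0)"
        by (simp add: distrib_right add_divide_distrib)
      then show ?thesis using q by (simp add: add.commute)
    qed
    show ?thesis using L1 F G by simp
  qed
  then show "Kf p C0 \<beta> = (p+1) * C0 * \<theta> powr p"
    using Kf_pos[OF p C0 b0] p C0 th by (simp add: ln_inj_iff)
  have "\<beta>^2 = 4 * exp (ln p + ln C0 + (p+1) * ln \<theta>)"
  proof -
    have "exp ((ln p + ln C0 + (p+1) * ln \<theta>)/2) * exp ((ln p + ln C0 + (p+1) * ln \<theta>)/2)
      = exp (ln p + ln C0 + (p+1) * ln \<theta>)" by (simp only: mult_exp_exp field_sum_of_halves)
    then show ?thesis unfolding \<beta>_def power2_eq_square by simp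
  qed
  also have "\<dots> = 4 * (p * C0 * (\<theta> powr p * \<theta>))"
    using p C0 th by (simp add: exp_add powr_def distrib_right)
  finally show "\<beta>^2/(4*\<theta>) = p * C0 * \<theta> powr p" using th by simp
qed

lemma sq_ineq:
  fixes \<theta> \<beta> u v :: real
  assumes "\<theta> > 0"
  shows "\<beta> * v * u \<le> \<theta> * u^2 + \<beta>^2 / (4*\<theta>) * v^2"
proof -
  have "\<theta> * u^2 + \<beta>^2 / (4*\<theta>) * v^2 - \<beta> * v * u = (2 * \<theta> * u - \<beta> * v)^2 / (4*\<theta>)"
    using assms by (simp add: field_simps power2_eq_square)
  moreover have "(2 * \<theta> * u - \<beta> * v)^2 / (4*\<theta>) \<ge> 0" using assms by simp
  ultimately show ?thesis by linarith
qed

lemma ennreal_mult_cancel_less: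
  fixes x y :: ennreal
  assumes "0 < a" "ennreal a * x < ennreal a * y" shows "x < y"
proof (rule ccontr)
  assume "\<not> x < y" hence "y \<le> x" by simp
  hence "ennreal a * y \<le> ennreal a * x" by (rule mult_left_mono) simp
  with assms(2) show False by simp
qed

lemma lowerL:
  fixes M :: "nat \<Rightarrow> 'a measure" and X :: "nat \<Rightarrow> 'a \<Rightarrow> real"
    and b :: "nat \<Rightarrow> real" and p C0 :: real
  assumes prob: "\<And>m. prob_space (M m)"
    and meas: "\<And>m. X m \<in> borel_measurable (M m)"
    and nonneg: "\<And>m x. x \<in> space (M m) \<Longrightarrow> X m x \<ge> 0"
    and bpos: "\<And>m. b m > 0"
    and p: "p > 1" and C0: "C0 > 0"
    and H: "\<And>\<beta> e. \<beta> > 0 \<Longrightarrow> e > 0 \<Longrightarrow> eventually (\<lambda>m. ereal (Kf p C0 \<beta> - e) <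
             ereal (1 / b m) * log_Eexp (M m) (\<lambda>x. \<beta> * sqrt (b m) * sqrt (X m x))) sequentially"
    and th: "\<theta> > 0" and e: "e > 0"
  shows "eventually (\<lambda>m. ereal (C0 * \<theta> powr p - e) < ereal (1 / b m) * log_Eexp (M m) (\<lambda>x. \<theta> * X m x)) sequentially"
proof -
  define \<beta> where "\<beta> = 2 * exp ((ln p + ln C0 + (p+1) * ln \<theta>)/2)"
  note KE = Kf_eq[OF p C0 th, folded \<beta>_def]
  define c where "c = \<beta>^2/(4*\<theta>)"
  have Kc: "Kf p C0 \<beta> - e - c = C0 * \<theta> powr p - e" using KE unfolding c_def by (simp add: algebra_simps)
  show ?thesis
    using H[OF KE(1) e]
  proof eventually_elim
    case (elim m)
    have nn1: "\<And>x. x \<in> space (M m) \<Longrightarrow> 0 \<le> \<beta> * sqrt (b m) * sqrt (X m x)"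
      using KE(1) bpos[of m] nonneg[of _ m] by simp
    have nn2: "\<And>x. x \<in> space (M m) \<Longrightarrow> 0 \<le> \<theta> * X m x"
      using th nonneg[of _ m] by simp
    have A: "ennreal (exp (b m * (Kf p C0 \<beta> - e))) < (\<integral>\<^sup>+ x. ennreal (exp (\<beta> * sqrt (b m) * sqrt (X m x))) \<partial>M m)"
      using elim bridge[where M="M m" and f="\<lambda>x. \<beta> * sqrt (b m) * sqrt (X m x)" and b="b m", OF prob[of m] nn1 bpos[of m]] by blast
    have "(\<integral>\<^sup>+ x. ennreal (exp (\<beta> * sqrt (b m) * sqrt (X m x))) \<partial>M m)
        \<le> (\<integral>\<^sup>+ x. ennreal (exp (c * b m)) * ennreal (exp (\<theta> * X m x)) \<partial>M m)"
    proof (rule nn_integral_mono)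
      fix x assume x: "x \<in> space (M m)"
      have "\<beta> * sqrt (b m) * sqrt (X m x) \<le> \<theta> * (sqrt (X m x))^2 + c * (sqrt (b m))^2"
        unfolding c_def by (rule sq_ineq[OF th])
      also have "\<dots> = \<theta> * X m x + c * b m" using x nonneg[OF x] bpos[of m] by simp
      finally show "ennreal (exp (\<beta> * sqrt (b m) * sqrt (X m x))) \<le> ennreal (exp (c * b m)) * ennreal (exp (\<theta> * X m x))"
        by (simp add: ennreal_mult[symmetric] mult_exp_exp add.commute)
    qed
    also have "\<dots> = ennreal (exp (c * b m)) * (\<integral>\<^sup>+ x. ennreal (exp (\<theta> * X m x)) \<partial>M m)"
      using meas[of m] by (intro nn_integral_cmult) measurable
    finally have B: "ennreal (exp (c * b m)) * ennreal (exp (b m * (C0 * \<theta> powr p - e))) <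
        ennreal (exp (c * b m)) * (\<integral>\<^sup>+ x. ennreal (exp (\<theta> * X m x)) \<partial>M m)"
    proof -
      assume "(\<integral>\<^sup>+ x. ennreal (exp (\<beta> * sqrt (b m) * sqrt (X m x))) \<partial>M m)
        \<le> ennreal (exp (c * b m)) * (\<integral>\<^sup>+ x. ennreal (exp (\<theta> * X m x)) \<partial>M m)"
      moreover have "ennreal (exp (c * b m)) * ennreal (exp (b m * (C0 * \<theta> powr p - e))) = ennreal (exp (b m * (Kf p C0 \<beta> - e)))"
        by (simp add: ennreal_mult[symmetric] mult_exp_exp Kc[symmetric] algebra_simps)
      ultimately show ?thesis using A by simp
    qed
    have "ennreal (exp (b m * (C0 * \<theta> powr p - e))) < (\<integral>\<^sup>+ x. ennreal (exp (\<theta> * X m x)) \<partial>M m)"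
      by (rule ennreal_mult_cancel_less[OF _ B]) simp
    then show ?case using bridge[where M="M m" and f="\<lambda>x. \<theta> * X m x" and b="b m", OF prob[of m] nn2 bpos[of m]] by blast
  qed
qed

lemma upperL:
  fixes M :: "nat \<Rightarrow> 'a measure" and X :: "nat \<Rightarrow> 'a \<Rightarrow> real"
    and b :: "nat \<Rightarrow> real" and p C0 :: real
  assumes prob: "\<And>m. prob_space (M m)"
    and meas: "\<And>m. X m \<in> borel_measurable (M m)"
    and nonneg: "\<And>m x. x \<in> space (M m) \<Longrightarrow> X m x \<ge> 0"
    and bpos: "\<And>m. b m > 0"
    and binf: "filterlim b at_top sequentially"
    and p: "p > 1" and C0: "C0 > 0"
    and H1: "\<And>\<beta> e. \<beta> > 0 \<Longrightarrow> e > 0 \<Longrightarrow> eventually (\<lambda>m.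
             ereal (1 / b m) * log_Eexp (M m) (\<lambda>x. \<beta> * sqrt (b m) * sqrt (X m x)) < ereal (Kf p C0 \<beta> + e)) sequentially"
    and H2: "\<And>\<beta>. \<beta> > 0 \<Longrightarrow> \<exists>A. eventually (\<lambda>m. ereal (1 / b m) * log_Eexp (M m) (\<lambda>x. \<beta> * X m x) < ereal A) sequentially"
    and th: "\<theta> > 0" and e: "e > 0"
  shows "eventually (\<lambda>m. ereal (1 / b m) * log_Eexp (M m) (\<lambda>x. \<theta> * X m x) < ereal (C0 * \<theta> powr p + e)) sequentially"
proof -
  define E0 where "E0 = C0 * \<theta> powr p"
  define \<delta> where "\<delta> = sqrt (e / \<theta>)"
  have d0: "\<delta> > 0" unfolding \<delta>_def using e th by simp
  have dd: "\<theta> * \<delta>^2 / 4 = e / 4" unfolding \<delta>_def using e th by simp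
  obtain A where HA: "eventually (\<lambda>m. ereal (1 / b m) * log_Eexp (M m) (\<lambda>x. (2*\<theta>) * X m x) < ereal A) sequentially"
    using H2[of "2*\<theta>"] th by auto
  define R where "R = \<bar>A - E0\<bar> / \<theta> + 1"
  obtain N :: nat where N: "R / \<delta> < real N" using reals_Archimedean2 by blast
  define S where "S = real N * \<delta>"
  have R1: "R \<ge> 1" unfolding R_def using th by simp
  have SR: "S > R" using N d0 unfolding S_def by (simp add: field_simps)
  have S0: "S > 0" using SR R1 by simp
  have AS: "A - \<theta> * S^2 \<le> E0"
  proof -
    have "S^2 \<ge> S" using SR R1 by (simp add: power2_eq_square)
    hence "\<theta> * S^2 \<ge> \<theta> * R" using SR th by (simp add: mult_left_mono)
    moreover have "\<theta> * R = \<bar>A - E0\<bar> + \<theta>" unfolding R_def using th by (simp add: field_simps)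
    moreover have "A - E0 \<le> \<bar>A - E0\<bar>" by simp
    ultimately show ?thesis using th by linarith
  qed
  define a where "a k = real k * \<delta>" for k :: nat
  define \<beta> where "\<beta> k = \<theta> * (2 * a k + \<delta>)" for k
  define c where "c k = \<theta> * a k * (a k + \<delta>)" for k
  have a0: "a k \<ge> 0" for k unfolding a_def using d0 by simp
  have b0: "\<beta> k > 0" for k unfolding \<beta>_def using th d0 a0[of k] by simp
  have bc: "(\<beta> k)^2 / (4*\<theta>) - c k = e / 4" for k
  proof -
    have "(\<beta> k)^2 / (4*\<theta>) - c k = \<theta> * \<delta>^2 / 4"
      unfolding \<beta>_def c_def using th by (simp add: field_simps power2_eq_square)
    then show ?thesis using dd by simp
  qed
  have EV1: "eventually (\<lambda>m. \<forall>k\<in>{..<N}. ereal (1 / b m) * log_Eexp (M m) (\<lambda>x. \<beta> k * sqrt (b m) * sqrt (X m x))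
              < ereal (Kf p C0 (\<beta> k) + e/4)) sequentially"
    by (rule eventually_ball_finite) (use H1 b0 e in auto)
  have EV3: "eventually (\<lambda>m. 4 * ln (real N + 1) / e \<le> b m) sequentially"
    using binf unfolding filterlim_at_top by blast
  show ?thesis
    using EV1 HA EV3
  proof eventually_elim
    case (elim m)
    define bm where "bm = b m"
    have bm0: "bm > 0" unfolding bm_def by (rule bpos)
    have [measurable]: "X m \<in> borel_measurable (M m)" by (rule meas)
    define I where "I k = (\<integral>\<^sup>+ x. ennreal (exp (\<beta> k * sqrt bm * sqrt (X m x))) \<partial>M m)" for k
    define IT where "IT = (\<integral>\<^sup>+ x. ennreal (exp ((2*\<theta>) * X m x)) \<partial>M m)"
    define Y where "Y = exp (bm * (E0 + e/2))"
    have Y0: "Y > 0" unfolding Y_def by simp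
    have Ik: "ennreal (exp (- bm * c k)) * I k \<le> ennreal Y" if k: "k < N" for k
    proof -
      have nn: "\<And>x. x \<in> space (M m) \<Longrightarrow> 0 \<le> \<beta> k * sqrt (b m) * sqrt (X m x)"
        using b0[of k] bpos[of m] nonneg[of _ m] by simp
      have "I k < ennreal (exp (bm * (Kf p C0 (\<beta> k) + e/4)))"
        using elim(1) k bridge[where M="M m" and f="\<lambda>x. \<beta> k * sqrt (b m) * sqrt (X m x)" and b="b m", OF prob[of m] nn bpos[of m]]
        unfolding I_def bm_def by auto
      hence "ennreal (exp (- bm * c k)) * I k \<le> ennreal (exp (- bm * c k)) * ennreal (exp (bm * (Kf p C0 (\<beta> k) + e/4)))"
        by (intro mult_left_mono) auto
      also have "\<dots> = ennreal (exp (bm * (Kf p C0 (\<beta> k) + e/4 - c k)))"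
        by (simp add: ennreal_mult[symmetric] mult_exp_exp algebra_simps)
      also have "\<dots> \<le> ennreal Y"
      proof -
        have "Kf p C0 (\<beta> k) \<le> E0 + (\<beta> k)^2 / (4*\<theta>)"
          unfolding E0_def by (rule Kf_le[OF p C0 b0 th])
        hence "Kf p C0 (\<beta> k) + e/4 - c k \<le> E0 + e/2" using bc[of k] by simp
        hence "bm * (Kf p C0 (\<beta> k) + e/4 - c k) \<le> bm * (E0 + e/2)" using bm0 by (simp add: mult_left_mono)
        then show ?thesis unfolding Y_def by (intro ennreal_leI) simp
      qed
      finally show ?thesis .
    qed
    have IT: "ennreal (exp (- bm * (\<theta> * S^2))) * IT \<le> ennreal Y"
    proof -
      have nn: "\<And>x. x \<in> space (M m) \<Longrightarrow> 0 \<le> (2*\<theta>) * X m x"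
        using th nonneg[of _ m] by simp
      have "IT < ennreal (exp (bm * A))"
        using elim(2) bridge[where M="M m" and f="\<lambda>x. (2*\<theta>) * X m x" and b="b m", OF prob[of m] nn bpos[of m]]
        unfolding IT_def bm_def by auto
      hence "ennreal (exp (- bm * (\<theta> * S^2))) * IT \<le> ennreal (exp (- bm * (\<theta> * S^2))) * ennreal (exp (bm * A))"
        by (intro mult_left_mono) auto
      also have "\<dots> = ennreal (exp (bm * (A - \<theta> * S^2)))"
        by (simp add: ennreal_mult[symmetric] mult_exp_exp algebra_simps)
      also have "\<dots> \<le> ennreal Y"
      proof -
        have "bm * (A - \<theta> * S^2) \<le> bm * (E0 + e/2)" using AS e bm0 by (intro mult_left_mono) auto
        then show ?thesis unfolding Y_def by (intro ennreal_leI) simp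
      qed
      finally show ?thesis .
    qed
    have PW: "ennreal (exp (\<theta> * X m x)) \<le>
        (\<Sum>k<N. ennreal (exp (- bm * c k)) * ennreal (exp (\<beta> k * sqrt bm * sqrt (X m x))))
        + ennreal (exp (- bm * (\<theta> * S^2))) * ennreal (exp ((2*\<theta>) * X m x))"
      if x: "x \<in> space (M m)" for x
    proof -
      define u where "u = sqrt (X m x) / sqrt bm"
      have X0: "X m x \<ge> 0" using nonneg[OF x] .
      have u0: "u \<ge> 0" unfolding u_def using bm0 nonneg[OF x] by simp
      have su: "sqrt bm * u = sqrt (X m x)" unfolding u_def using bm0 by simp
      have Xu: "X m x = bm * u^2"
      proof -
        have "X m x = (sqrt (X m x))^2" using X0 by simp
        also have "\<dots> = (sqrt bm)^2 * u^2" unfolding su[symmetric] by (simp add: power_mult_distrib)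
        finally show ?thesis using bm0 by simp
      qed
      show ?thesis
      proof (cases "u \<ge> S")
        case True
        have "S^2 \<le> u^2" using True S0 by (intro power_mono) auto
        hence "bm * S^2 \<le> X m x" unfolding Xu using bm0 by (simp add: mult_left_mono)
        hence "\<theta> * X m x \<le> - bm * (\<theta> * S^2) + (2*\<theta>) * X m x" using th
          by (simp add: algebra_simps)
        hence "ennreal (exp (\<theta> * X m x)) \<le> ennreal (exp (- bm * (\<theta> * S^2))) * ennreal (exp ((2*\<theta>) * X m x))"
          by (simp add: ennreal_mult[symmetric] mult_exp_exp)
        then show ?thesis by (rule add_increasing[OF zero_le])
      next
        case False
        define k where "k = nat \<lfloor>u / \<delta>\<rfloor>"
        have fl: "real k = real_of_int \<lfloor>u / \<delta>\<rfloor>" unfolding k_def using u0 d0 by simp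
        have kN: "k < N"
        proof -
          have "u / \<delta> < real N" using False d0 unfolding S_def by (simp add: field_simps)
          hence "real k < real N" using fl by linarith
          then show ?thesis by simp
        qed
        have ak1: "a k \<le> u" 
        proof -
          have "real k \<le> u / \<delta>" using fl by linarith
          then show ?thesis unfolding a_def using d0 by (simp add: field_simps)
        qed
        have ak2: "u \<le> a k + \<delta>"
        proof -
          have "u / \<delta> \<le> real k + 1" using fl by linarith
          then show ?thesis unfolding a_def using d0 by (simp add: field_simps)
        qed
        have "(u - a k) * (u - a k - \<delta>) \<le> 0" using ak1 ak2 by (intro mult_nonneg_nonpos) auto
        hence "\<theta> * bm * ((u - a k) * (u - a k - \<delta>)) \<le> 0" using th bm0
          by (simp add: mult_nonneg_nonpos)
        moreover have "\<theta> * X m x - (\<beta> k * sqrt bm * sqrt (X m x) - bm * c k) = \<theta> * bm * ((u - a k) * (u - a k - \<delta>))"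
        proof -
          have "\<beta> k * sqrt bm * sqrt (X m x) = \<beta> k * bm * u"
            unfolding su[symmetric] using bm0 by (simp add: mult.assoc[symmetric])
          then show ?thesis unfolding Xu \<beta>_def c_def by (simp add: algebra_simps power2_eq_square)
        qed
        ultimately have "\<theta> * X m x \<le> - bm * c k + \<beta> k * sqrt bm * sqrt (X m x)" by linarith
        hence "ennreal (exp (\<theta> * X m x)) \<le> ennreal (exp (- bm * c k)) * ennreal (exp (\<beta> k * sqrt bm * sqrt (X m x)))"
          by (simp add: ennreal_mult[symmetric] mult_exp_exp)
        also have "\<dots> \<le> (\<Sum>k<N. ennreal (exp (- bm * c k)) * ennreal (exp (\<beta> k * sqrt bm * sqrt (X m x))))"
          by (rule member_le_sum) (use kN in auto)
        finally show ?thesis by (rule add_increasing2[OF zero_le])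
      qed
    qed
    have "(\<integral>\<^sup>+ x. ennreal (exp (\<theta> * X m x)) \<partial>M m) \<le> (\<integral>\<^sup>+ x.
        (\<Sum>k<N. ennreal (exp (- bm * c k)) * ennreal (exp (\<beta> k * sqrt bm * sqrt (X m x))))
        + ennreal (exp (- bm * (\<theta> * S^2))) * ennreal (exp ((2*\<theta>) * X m x)) \<partial>M m)"
      by (rule nn_integral_mono) (rule PW)
    also have "\<dots> = (\<Sum>k<N. ennreal (exp (- bm * c k)) * I k) + ennreal (exp (- bm * (\<theta> * S^2))) * IT"
    proof -
      have m1: "(\<lambda>x. ennreal (exp (- bm * c k)) * ennreal (exp (\<beta> k * sqrt bm * sqrt (X m x)))) \<in> borel_measurable (M m)" for k
        by measurable
      have m2: "(\<lambda>x. \<Sum>k<N. ennreal (exp (- bm * c k)) * ennreal (exp (\<beta> k * sqrt bm * sqrt (X m x)))) \<in> borel_measurable (M m)"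
        by measurable
      have m3: "(\<lambda>x. ennreal (exp (- bm * (\<theta> * S^2))) * ennreal (exp ((2*\<theta>) * X m x))) \<in> borel_measurable (M m)"
        by measurable
      show ?thesis
        apply (subst nn_integral_add[OF m2 m3])
        apply (subst nn_integral_sum[OF m1])
        apply (subst nn_integral_cmult, measurable)+
        apply (simp add: I_def IT_def)
        done
    qed
    also have "\<dots> \<le> (\<Sum>k<N. ennreal Y) + ennreal Y"
      apply (rule add_mono)
       apply (rule sum_mono)
       apply (rule Ik)
       apply simp
      apply (rule IT)
      done
    also have "\<dots> = ennreal ((real N + 1) * Y)"
    proof -
      have "(\<Sum>k<N. ennreal Y) = ennreal (\<Sum>k<N. Y)" using Y0 by (intro sum_ennreal) simp
      also have "(\<Sum>k<N. Y) = real N * Y" by simp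
      finally have "(\<Sum>k<N. ennreal Y) + ennreal Y = ennreal (real N * Y) + ennreal Y" by simp
      also have "\<dots> = ennreal (real N * Y + Y)" using Y0 by (intro ennreal_plus[symmetric]) auto
      finally show ?thesis by (simp add: distrib_right)
    qed
    also have "\<dots> < ennreal (exp (bm * (E0 + e)))"
    proof -
      have "ln (real N + 1) \<le> bm * e / 4" using elim(3) e unfolding bm_def by (simp add: field_simps)
      hence "real N + 1 \<le> exp (bm * e / 4)" by (metis exp_le_cancel_iff exp_ln of_nat_0_le_iff add_nonneg_pos zero_less_one)
      hence "(real N + 1) * Y \<le> exp (bm * e / 4) * Y" using Y0 by simp
      also have "\<dots> < exp (bm * (E0 + e))" unfolding Y_def mult_exp_exp using bm0 e
        by (simp add: algebra_simps)
      finally show ?thesis using Y0 by (intro ennreal_lessI) auto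
    qed
    finally have "(\<integral>\<^sup>+ x. ennreal (exp (\<theta> * X m x)) \<partial>M m) < ennreal (exp (bm * (E0 + e)))" .
    moreover have nn: "\<And>x. x \<in> space (M m) \<Longrightarrow> 0 \<le> \<theta> * X m x" using th nonneg[of _ m] by simp
    ultimately show ?case
      using bridge[where M="M m" and f="\<lambda>x. \<theta> * X m x" and b="b m", OF prob[of m] nn bpos[of m]]
      unfolding bm_def E0_def by blast
  qed
qed

lemma tend_lemma:
  fixes u :: "nat \<Rightarrow> ereal"
  assumes "\<And>e. e > 0 \<Longrightarrow> eventually (\<lambda>m. ereal (c - e) < u m) sequentially"
    and "\<And>e. e > 0 \<Longrightarrow> eventually (\<lambda>m. u m < ereal (c + e)) sequentially"
  shows "u \<longlonglongrightarrow> ereal c"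
proof (rule order_tendstoI)
  fix a assume "a < ereal c"
  then obtain r where r: "a < ereal r" "ereal r < ereal c" using ereal_dense2 by blast
  have "eventually (\<lambda>m. ereal (c - (c - r)) < u m) sequentially" using assms(1)[of "c - r"] r by simp
  then show "eventually (\<lambda>m. a < u m) sequentially"
    by eventually_elim (use r in auto)
next
  fix a assume "ereal c < a"
  then obtain r where r: "ereal c < ereal r" "ereal r < a" using ereal_dense2 by blast
  have "eventually (\<lambda>m. u m < ereal (c + (r - c))) sequentially" using assms(2)[of "r - c"] r by simp
  then show "eventually (\<lambda>m. u m < a) sequentially"
    by eventually_elim (use r in auto)
qed

theorem lemmaA2:
  fixes M :: "nat \<Rightarrow> 'a measure" and X :: "nat \<Rightarrow> 'a \<Rightarrow> real"
    and b :: "nat \<Rightarrow> real" and p C0 :: real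
  assumes prob: "\<And>m. prob_space (M m)"
    and meas: "\<And>m. X m \<in> borel_measurable (M m)"
    and nonneg: "\<And>m x. x \<in> space (M m) \<Longrightarrow> X m x \<ge> 0"
    and bpos: "\<And>m. b m > 0"
    and binf: "filterlim b at_top sequentially"
    and p: "p > 1" and C0: "C0 > 0"
  shows
    "((\<forall>\<beta>>0. limsup (\<lambda>m. ereal (1 / b m) * log_Eexp (M m) (\<lambda>x. \<beta> * X m x))
                 \<le> ereal (C0 * \<beta> powr p)
            \<and> liminf (\<lambda>m. ereal (1 / b m) * log_Eexp (M m) (\<lambda>x. \<beta> * sqrt (b m) * sqrt (X m x)))
                 \<ge> ereal ((p + 1) / p * (p * C0) powr (1 / (p + 1)) * (\<beta> / 2) powr (2 * p / (p + 1))))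
       \<longrightarrow> (\<forall>\<beta>>0. (\<lambda>m. ereal (1 / b m) * log_Eexp (M m) (\<lambda>x. \<beta> * X m x))
                    \<longlonglongrightarrow> ereal (C0 * \<beta> powr p)))
     \<and>
     ((\<forall>\<beta>>0. limsup (\<lambda>m. ereal (1 / b m) * log_Eexp (M m) (\<lambda>x. \<beta> * X m x)) < \<infinity>
            \<and> (\<lambda>m. ereal (1 / b m) * log_Eexp (M m) (\<lambda>x. \<beta> * sqrt (b m) * sqrt (X m x)))
                 \<longlonglongrightarrow> ereal ((p + 1) / p * (p * C0) powr (1 / (p + 1)) * (\<beta> / 2) powr (2 * p / (p + 1))))
       \<longrightarrow> (\<forall>\<beta>>0. (\<lambda>m. ereal (1 / b m) * log_Eexp (M m) (\<lambda>x. \<beta> * X m x))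
                    \<longlonglongrightarrow> ereal (C0 * \<beta> powr p)))"
proof (intro conjI impI allI)
  fix \<theta> :: real
  assume hyp: "\<forall>\<beta>>0. limsup (\<lambda>m. ereal (1 / b m) * log_Eexp (M m) (\<lambda>x. \<beta> * X m x))
                 \<le> ereal (C0 * \<beta> powr p)
            \<and> liminf (\<lambda>m. ereal (1 / b m) * log_Eexp (M m) (\<lambda>x. \<beta> * sqrt (b m) * sqrt (X m x)))
                 \<ge> ereal ((p + 1) / p * (p * C0) powr (1 / (p + 1)) * (\<beta> / 2) powr (2 * p / (p + 1)))"
  assume th: "0 < \<theta>"
    have H: "eventually (\<lambda>m. ereal (Kf p C0 \<beta> - e) <
             ereal (1 / b m) * log_Eexp (M m) (\<lambda>x. \<beta> * sqrt (b m) * sqrt (X m x))) sequentially"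
      if "\<beta> > 0" "e > 0" for \<beta> e
    proof -
      have "ereal (Kf p C0 \<beta> - e) < ereal (Kf p C0 \<beta>)" using that by simp
      also have "\<dots> \<le> liminf (\<lambda>m. ereal (1 / b m) * log_Eexp (M m) (\<lambda>x. \<beta> * sqrt (b m) * sqrt (X m x)))"
        using conjunct2[OF hyp[rule_format, OF that(1)]] unfolding Kf_def .
      finally have "ereal (Kf p C0 \<beta> - e) < liminf (\<lambda>m. ereal (1 / b m) * log_Eexp (M m) (\<lambda>x. \<beta> * sqrt (b m) * sqrt (X m x)))" .
      from less_LiminfD[OF this] show ?thesis by simp
    qed
    show "(\<lambda>m. ereal (1 / b m) * log_Eexp (M m) (\<lambda>x. \<theta> * X m x)) \<longlonglongrightarrow> ereal (C0 * \<theta> powr p)"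
    proof (rule tend_lemma)
      fix e :: real assume e: "e > 0"
      show "eventually (\<lambda>m. ereal (C0 * \<theta> powr p - e) < ereal (1 / b m) * log_Eexp (M m) (\<lambda>x. \<theta> * X m x)) sequentially"
        by (rule lowerL[OF prob meas nonneg bpos p C0 H th e])
      show "eventually (\<lambda>m. ereal (1 / b m) * log_Eexp (M m) (\<lambda>x. \<theta> * X m x) < ereal (C0 * \<theta> powr p + e)) sequentially"
      proof -
        have "limsup (\<lambda>m. ereal (1 / b m) * log_Eexp (M m) (\<lambda>x. \<theta> * X m x)) \<le> ereal (C0 * \<theta> powr p)"
          using conjunct1[OF hyp[rule_format, OF th]] .
        also have "\<dots> < ereal (C0 * \<theta> powr p + e)" using e by simp
        finally have "limsup (\<lambda>m. ereal (1 / b m) * log_Eexp (M m) (\<lambda>x. \<theta> * X m x)) < ereal (C0 * \<theta> powr p + e)" .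
        from Limsup_lessD[OF this] show ?thesis by simp
      qed
    qed
next
  fix \<theta> :: real
  assume hyp: "\<forall>\<beta>>0. limsup (\<lambda>m. ereal (1 / b m) * log_Eexp (M m) (\<lambda>x. \<beta> * X m x)) < \<infinity>
            \<and> (\<lambda>m. ereal (1 / b m) * log_Eexp (M m) (\<lambda>x. \<beta> * sqrt (b m) * sqrt (X m x)))
                 \<longlonglongrightarrow> ereal ((p + 1) / p * (p * C0) powr (1 / (p + 1)) * (\<beta> / 2) powr (2 * p / (p + 1)))"
  assume th: "0 < \<theta>"
    have T: "(\<lambda>m. ereal (1 / b m) * log_Eexp (M m) (\<lambda>x. \<beta> * sqrt (b m) * sqrt (X m x)))
                 \<longlonglongrightarrow> ereal (Kf p C0 \<beta>)" if "\<beta> > 0" for \<beta>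
      using conjunct2[OF hyp[rule_format, OF that]] unfolding Kf_def .
    have H: "eventually (\<lambda>m. ereal (Kf p C0 \<beta> - e) <
             ereal (1 / b m) * log_Eexp (M m) (\<lambda>x. \<beta> * sqrt (b m) * sqrt (X m x))) sequentially"
      if "\<beta> > 0" "e > 0" for \<beta> e
      by (rule order_tendstoD(1)[OF T[OF that(1)]]) (use that in simp)
    have H1: "eventually (\<lambda>m.
             ereal (1 / b m) * log_Eexp (M m) (\<lambda>x. \<beta> * sqrt (b m) * sqrt (X m x)) < ereal (Kf p C0 \<beta> + e)) sequentially"
      if "\<beta> > 0" "e > 0" for \<beta> e
      by (rule order_tendstoD(2)[OF T[OF that(1)]]) (use that in simp)
    have H2: "\<exists>A. eventually (\<lambda>m. ereal (1 / b m) * log_Eexp (M m) (\<lambda>x. \<beta> * X m x) < ereal A) sequentially"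
      if "\<beta> > 0" for \<beta>
    proof -
      have "limsup (\<lambda>m. ereal (1 / b m) * log_Eexp (M m) (\<lambda>x. \<beta> * X m x)) < \<infinity>" using conjunct1[OF hyp[rule_format, OF that]] .
      from less_PInf_Ex_of_nat[THEN iffD1, OF less_imp_neq[OF this]] obtain n :: nat
        where n: "limsup (\<lambda>m. ereal (1 / b m) * log_Eexp (M m) (\<lambda>x. \<beta> * X m x)) < ereal (real n)" ..
      show ?thesis by (rule exI[of _ "real n"]) (rule Limsup_lessD[OF n])
    qed
    show "(\<lambda>m. ereal (1 / b m) * log_Eexp (M m) (\<lambda>x. \<theta> * X m x)) \<longlonglongrightarrow> ereal (C0 * \<theta> powr p)"
    proof (rule tend_lemma)
      fix e :: real assume e: "e > 0"
      show "eventually (\<lambda>m. ereal (C0 * \<theta> powr p - e) < ereal (1 / b m) * log_Eexp (M m) (\<lambda>x. \<theta> * X m x)) sequentially"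
        by (rule lowerL[OF prob meas nonneg bpos p C0 H th e])
      show "eventually (\<lambda>m. ereal (1 / b m) * log_Eexp (M m) (\<lambda>x. \<theta> * X m x) < ereal (C0 * \<theta> powr p + e)) sequentially"
        by (rule upperL[OF prob meas nonneg bpos binf p C0 H1 H2 th e])
    qed
qed

end
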